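(* Let $n$ individuals be connected by a directed graph with edge set $E\subseteq[n]\times[n]$ (self-loops allowed), with in-neighborhoods $\mathcal{N}_i=\{j:(j,i)\in E\}$, and let $d=\max\{d_{\mathrm{in}},d_{\mathrm{out}}\}$ be the maximum of the maximum in-degree and maximum out-degree. Suppose the potential outcomes have polynomial degree at most $\beta$: for every $i$ and $\mathbf z\in\{0,1\}^n$, $$Y_i(\mathbf z)=\sum_{\mathcal S\subseteq\mathcal N_i,\ |\mathcal S|\le\beta} c_{i,\mathcal S}\prod_{j\in\mathcal S} z_j,$$ and let $Y_{\max}=\max_i\sum_{\mathcal S\subseteq\mathcal N_i,|\mathcal S|\le\beta}|c_{i,\mathcal S}|$. Let $\mathrm{TTE}=\frac1n\sum_{i=1}^n\big(Y_i(\mathbf 1)-Y_i(\mathbf 0)\big)$. Consider a staggered rollout Bernoulli design with treatment probabilities $0=p_0<p_1<\dots<p_\beta\le 1$: sample $u_i\sim U[0,1]$ independently and set $z_i^t=\mathbb I(u_i\le p_t)$ for $t=0,\dots,\beta$. Suppose one observes $Y^{\mathrm{obs}}_{i,t}=Y_i(\mathbf z^t)+\varepsilon_{i,t}$ with $\varepsilon_{i,t}$ i.i.d. $N(0,\sigma^2)$, independent of the treatments. Define the estimator $$\widehat{\mathrm{TTE}}_{\mathrm{PI}}(\mathbf p)=\sum_{t=0}^{\beta}\big(\ell_{t,\mathbf p}(1)-\ell_{t,\mathbf p}(0)\big)\Big(\frac1n\sum_{i=1}^n Y^{\mathrm{obs}}_{i,t}\Big),\qquad \ell_{t,\mathbf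 p}(x)=\prod_{s\ne t}\frac{x-p_s}{p_t-p_s},$$ and $\Delta_{\mathbf p}=\min_{1\le t\le\beta}(p_t-p_{t-1})$. Then $\widehat{\mathrm{TTE}}_{\mathrm{PI}}(\mathbf p)$ is an unbiased estimator of $\mathrm{TTE}$, and its variance is $$O\Big(\tfrac{d^2\beta^2}{n}Y_{\max}^2\Delta_{\mathbf p}^{-2\beta}+\tfrac{\sigma^2\beta}{n}\Delta_{\mathbf p}^{-2\beta}\Big).$$
   Context: $\ell_{t,\mathbf p}$ are the Lagrange interpolation basis polynomials for the nodes $p_0,\dots,p_\beta$. The $O(\cdot)$ hides an absolute constant. *)

theory Defs
  imports "HOL-Probability.Probability"
begin

definition in_nbhd :: "(nat \<times> nat) set \<Rightarrow> nat \<Rightarrow> nat set" where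
  "in_nbhd E i = {j. (j, i) \<in> E}"

definition out_nbhd :: "(nat \<times> nat) set \<Rightarrow> nat \<Rightarrow> nat set" where
  "out_nbhd E i = {j. (i, j) \<in> E}"

definition max_degree :: "nat \<Rightarrow> (nat \<times> nat) set \<Rightarrow> nat" where
  "max_degree n E = max (Max ((\<lambda>i. card (in_nbhd E i)) ` {..<n}))
                         (Max ((\<lambda>i. card (out_nbhd E i)) ` {..<n}))"

definition Ypot :: "(nat \<times> nat) set \<Rightarrow> nat \<Rightarrow> (nat \<Rightarrow> nat set \<Rightarrow> real) \<Rightarrow> nat \<Rightarrow> (nat \<Rightarrow> real) \<Rightarrow> real" where
  "Ypot E \<beta> c i z = (\<Sum>S\<in>{S. S \<subseteq> in_nbhd E i \<and> card S \<le> \<beta>}. c i S * (\<Prod>j\<in>S. z j))"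

definition Ymax :: "nat \<Rightarrow> (nat \<times> nat) set \<Rightarrow> nat \<Rightarrow> (nat \<Rightarrow> nat set \<Rightarrow> real) \<Rightarrow> real" where
  "Ymax n E \<beta> c = Max ((\<lambda>i. \<Sum>S\<in>{S. S \<subseteq> in_nbhd E i \<and> card S \<le> \<beta>}. \<bar>c i S\<bar>) ` {..<n})"

definition TTE :: "nat \<Rightarrow> (nat \<times> nat) set \<Rightarrow> nat \<Rightarrow> (nat \<Rightarrow> nat set \<Rightarrow> real) \<Rightarrow> real" where
  "TTE n E \<beta> c = (1 / real n) * (\<Sum>i<n. Ypot E \<beta> c i (\<lambda>_. 1) - Ypot E \<beta> c i (\<lambda>_. 0))"

definition lagrange :: "(nat \<Rightarrow> real) \<Rightarrow> nat \<Rightarrow> nat \<Rightarrow> real \<Rightarrow> real" where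
  "lagrange p \<beta> t x = (\<Prod>s\<in>{..\<beta>} - {t}. (x - p s) / (p t - p s))"

definition delta_p :: "(nat \<Rightarrow> real) \<Rightarrow> nat \<Rightarrow> real" where
  "delta_p p \<beta> = Min ((\<lambda>t. p t - p (t - 1)) ` {1..\<beta>})"

definition noise_dist :: "real \<Rightarrow> real measure" where
  "noise_dist \<sigma> = (if \<sigma> = 0 then return lborel 0 else density lborel (normal_density 0 \<sigma>))"

definition design_measure :: "nat \<Rightarrow> nat \<Rightarrow> real \<Rightarrow> ((nat \<Rightarrow> real) \<times> (nat \<times> nat \<Rightarrow> real)) measure" where
  "design_measure n \<beta> \<sigma> =
     (PiM {..<n} (\<lambda>_. uniform_measure lborel {0..1::real}))
     \<Otimes>\<^sub>M (PiM ({..<n} \<times> {..\<beta>}) (\<lambda>_. noise_dist \<sigma>))"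

definition treat :: "(nat \<Rightarrow> real) \<Rightarrow> (nat \<Rightarrow> real) \<Rightarrow> nat \<Rightarrow> nat \<Rightarrow> real" where
  "treat p u t i = (if u i \<le> p t then 1 else 0)"

definition Yobs :: "(nat \<times> nat) set \<Rightarrow> nat \<Rightarrow> (nat \<Rightarrow> nat set \<Rightarrow> real) \<Rightarrow> (nat \<Rightarrow> real)
    \<Rightarrow> (nat \<Rightarrow> real) \<times> (nat \<times> nat \<Rightarrow> real) \<Rightarrow> nat \<Rightarrow> nat \<Rightarrow> real" where
  "Yobs E \<beta> c p \<omega> i t = Ypot E \<beta> c i (treat p (fst \<omega>) t) + snd \<omega> (i, t)"

definition est_PI :: "nat \<Rightarrow> (nat \<times> nat) set \<Rightarrow> nat \<Rightarrow> (nat \<Rightarrow> nat set \<Rightarrow> real) \<Rightarrow> (nat \<Rightarrow> real)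
    \<Rightarrow> (nat \<Rightarrow> real) \<times> (nat \<times> nat \<Rightarrow> real) \<Rightarrow> real" where
  "est_PI n E \<beta> c p \<omega> =
     (\<Sum>t\<le>\<beta>. (lagrange p \<beta> t 1 - lagrange p \<beta> t 0) * ((1 / real n) * (\<Sum>i<n. Yobs E \<beta> c p \<omega> i t)))"

end

theory Submission
  imports Defs "HOL-Computational_Algebra.Polynomial"
begin


lemma coord_indep:
  assumes D: "prob_space D"
  shows "prob_space.indep_vars (PiM I (\<lambda>_. D)) (\<lambda>_. D) (\<lambda>i \<omega>. \<omega> i) I"
proof -
  interpret D: prob_space D by fact
  interpret P: product_prob_space "\<lambda>_. D" I
    by unfold_locales
  show ?thesis
  proof (cases "I = {}")
    case True
    show ?thesis unfolding P.indep_vars_def2 P.indep_sets_def using True by auto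
  next
    case False
    have d1: "distr (PiM I (\<lambda>_. D)) (PiM I (\<lambda>_. D)) (\<lambda>x. \<lambda>i\<in>I. x i) = PiM I (\<lambda>_. D)"
    proof -
      have "distr (PiM I (\<lambda>_. D)) (PiM I (\<lambda>_. D)) (\<lambda>x. \<lambda>i\<in>I. x i) = distr (PiM I (\<lambda>_. D)) (PiM I (\<lambda>_. D)) (\<lambda>x. x)"
        by (rule distr_cong) (auto simp: space_PiM PiE_def extensional_restrict)
      then show ?thesis by simp
    qed
    have d2: "distr (PiM I (\<lambda>_. D)) D (\<lambda>\<omega>. \<omega> i) = D" if "i \<in> I" for i
      using P.PiM_component[OF that] .
    show ?thesis
      apply (subst P.indep_vars_iff_distr_eq_PiM'[OF False])
       apply measurable
      apply (subst d1)
      apply (rule PiM_cong)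
      using d2 by auto
  qed
qed

lemma coord_integral:
  fixes g :: "'a \<Rightarrow> real"
  assumes D: "prob_space D" and j: "j \<in> I" and g: "g \<in> borel_measurable D"
  shows "(\<integral>\<omega>. g (\<omega> j) \<partial>PiM I (\<lambda>_. D)) = (\<integral>x. g x \<partial>D)"
    and "integrable (PiM I (\<lambda>_. D)) (\<lambda>\<omega>. g (\<omega> j)) \<longleftrightarrow> integrable D g"
proof -
  interpret D: prob_space D by fact
  interpret P: product_prob_space "\<lambda>_. D" I
    by unfold_locales
  have d: "distr (PiM I (\<lambda>_. D)) D (\<lambda>\<omega>. \<omega> j) = D"
    using P.PiM_component[OF j] .
  have m: "(\<lambda>\<omega>. \<omega> j) \<in> measurable (PiM I (\<lambda>_. D)) D"
    using j by measurable
  show "(\<integral>\<omega>. g (\<omega> j) \<partial>PiM I (\<lambda>_. D)) = (\<integral>x. g x \<partial>D)"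
    using integral_distr[OF m g] d by simp
  show "integrable (PiM I (\<lambda>_. D)) (\<lambda>\<omega>. g (\<omega> j)) \<longleftrightarrow> integrable D g"
    using integrable_distr_eq[OF m g] d by simp
qed

lemma prod_coord_integral:
  fixes g :: "'i \<Rightarrow> 'a \<Rightarrow> real"
  assumes D: "prob_space D" and S: "finite S" "S \<subseteq> I"
    and g: "\<And>j. j \<in> S \<Longrightarrow> integrable D (g j)"
  shows "(\<integral>\<omega>. (\<Prod>j\<in>S. g j (\<omega> j)) \<partial>PiM I (\<lambda>_. D)) = (\<Prod>j\<in>S. \<integral>x. g j x \<partial>D)"
    and "integrable (PiM I (\<lambda>_. D)) (\<lambda>\<omega>. \<Prod>j\<in>S. g j (\<omega> j))"
proof -
  interpret D: prob_space D by fact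
  interpret P: product_prob_space "\<lambda>_. D" I
    by unfold_locales
  have ind: "P.indep_vars (\<lambda>_. borel) (\<lambda>j \<omega>. g j (\<omega> j)) S"
    by (rule P.indep_vars_compose2[OF P.indep_vars_subset[OF coord_indep[OF D] S(2)]])
       (use g in auto)
  have int: "integrable (PiM I (\<lambda>_. D)) (\<lambda>\<omega>. g j (\<omega> j))" if "j \<in> S" for j
    using coord_integral(2)[OF D, of j I "g j"] g[OF that] S that by auto
  show "(\<integral>\<omega>. (\<Prod>j\<in>S. g j (\<omega> j)) \<partial>PiM I (\<lambda>_. D)) = (\<Prod>j\<in>S. \<integral>x. g j x \<partial>D)"
    apply (subst P.indep_vars_lebesgue_integral[OF S(1) ind int], assumption)
    apply (rule prod.cong, simp)
    using coord_integral(1)[OF D, of _ I] g S by auto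
  show "integrable (PiM I (\<lambda>_. D)) (\<lambda>\<omega>. \<Prod>j\<in>S. g j (\<omega> j))"
    by (rule P.indep_vars_integrable[OF S(1) ind int])
qed

lemma distr_pair_snd':
  assumes "prob_space M1" "prob_space M2"
  shows "distr (M1 \<Otimes>\<^sub>M M2) M2 snd = M2"
proof -
  interpret M1: prob_space M1 by fact
  interpret M2: prob_space M2 by fact
  show ?thesis
  proof (intro measure_eqI)
    fix A assume A: "A \<in> sets (distr (M1 \<Otimes>\<^sub>M M2) M2 snd)"
    from A have "emeasure (distr (M1 \<Otimes>\<^sub>M M2) M2 snd) A = emeasure (M1 \<Otimes>\<^sub>M M2) (space M1 \<times> A)"
      by (auto simp add: emeasure_distr space_pair_measure dest: sets.sets_into_space intro!: arg_cong2[where f=emeasure])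
    with A show "emeasure (distr (M1 \<Otimes>\<^sub>M M2) M2 snd) A = emeasure M2 A"
      by (simp add: M2.emeasure_pair_measure_Times M1.emeasure_space_1)
  qed simp
qed

lemma pair_integral:
  fixes f :: "'a \<Rightarrow> real" and h :: "'b \<Rightarrow> real"
  assumes M1: "prob_space M1" and M2: "prob_space M2"
    and f: "f \<in> borel_measurable M1" and h: "h \<in> borel_measurable M2"
  shows "(\<integral>\<omega>. f (fst \<omega>) \<partial>(M1 \<Otimes>\<^sub>M M2)) = (\<integral>x. f x \<partial>M1)"
    and "integrable (M1 \<Otimes>\<^sub>M M2) (\<lambda>\<omega>. f (fst \<omega>)) \<longleftrightarrow> integrable M1 f"
    and "(\<integral>\<omega>. h (snd \<omega>) \<partial>(M1 \<Otimes>\<^sub>M M2)) = (\<integral>x. h x \<partial>M2)"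
    and "integrable (M1 \<Otimes>\<^sub>M M2) (\<lambda>\<omega>. h (snd \<omega>)) \<longleftrightarrow> integrable M2 h"
proof -
  interpret M1: prob_space M1 by fact
  interpret M2: prob_space M2 by fact
  have d1: "distr (M1 \<Otimes>\<^sub>M M2) M1 fst = M1" by (rule M2.distr_pair_fst)
  have d2: "distr (M1 \<Otimes>\<^sub>M M2) M2 snd = M2" by (rule distr_pair_snd'[OF M1 M2])
  have m1: "fst \<in> measurable (M1 \<Otimes>\<^sub>M M2) M1" by measurable
  have m2: "snd \<in> measurable (M1 \<Otimes>\<^sub>M M2) M2" by measurable
  show "(\<integral>\<omega>. f (fst \<omega>) \<partial>(M1 \<Otimes>\<^sub>M M2)) = (\<integral>x. f x \<partial>M1)"
    using integral_distr[OF m1 f] d1 by simp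
  show "integrable (M1 \<Otimes>\<^sub>M M2) (\<lambda>\<omega>. f (fst \<omega>)) \<longleftrightarrow> integrable M1 f"
    using integrable_distr_eq[OF m1 f] d1 by simp
  show "(\<integral>\<omega>. h (snd \<omega>) \<partial>(M1 \<Otimes>\<^sub>M M2)) = (\<integral>x. h x \<partial>M2)"
    using integral_distr[OF m2 h] d2 by simp
  show "integrable (M1 \<Otimes>\<^sub>M M2) (\<lambda>\<omega>. h (snd \<omega>)) \<longleftrightarrow> integrable M2 h"
    using integrable_distr_eq[OF m2 h] d2 by simp
qed

lemma noise_facts:
  assumes s: "\<sigma> \<ge> 0"
  shows "prob_space (noise_dist \<sigma>)"
    and "integrable (noise_dist \<sigma>) (\<lambda>x. x)"
    and "(\<integral>x. x \<partial>noise_dist \<sigma>) = 0"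
    and "integrable (noise_dist \<sigma>) (\<lambda>x. x\<^sup>2)"
    and "(\<integral>x. x\<^sup>2 \<partial>noise_dist \<sigma>) = \<sigma>\<^sup>2"
proof -
  have all: "prob_space (noise_dist \<sigma>) \<and> integrable (noise_dist \<sigma>) (\<lambda>x. x) \<and>
    (\<integral>x. x \<partial>noise_dist \<sigma>) = 0 \<and> integrable (noise_dist \<sigma>) (\<lambda>x. x\<^sup>2) \<and>
    (\<integral>x. x\<^sup>2 \<partial>noise_dist \<sigma>) = \<sigma>\<^sup>2"
  proof (cases "\<sigma> = 0")
    case True
    interpret prob_space "return lborel (0::real)" by (rule prob_space_return) simp
    have ae: "AE x in return lborel 0. x = (0::real)" by (simp add: AE_return)
    have i1: "integrable (return lborel 0) (\<lambda>x::real. x)"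
      by (rule integrable_cong_AE_imp[where g="\<lambda>_. 0"]) (simp_all add: ae)
    have i2: "integrable (return lborel 0) (\<lambda>x::real. x\<^sup>2)"
      by (rule integrable_cong_AE_imp[where g="\<lambda>_. 0"]) (simp_all add: ae)
    have nd: "noise_dist \<sigma> = return lborel 0" using True by (simp add: noise_dist_def)
    have e1: "(\<integral>x. x \<partial>return lborel (0::real)) = 0" by (subst integral_return) simp_all
    have e2: "(\<integral>x. x\<^sup>2 \<partial>return lborel (0::real)) = 0" by (subst integral_return) simp_all
    show ?thesis unfolding nd using True i1 i2 e1 e2 prob_space_axioms by simp
  next
    case False
    then have sp: "\<sigma> > 0" using s by simp
    have h1: "has_bochner_integral lborel (\<lambda>x. normal_density 0 \<sigma> x * x) 0"
      using normal_moment_nz_1[OF sp, of 0] .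
    have h2: "has_bochner_integral lborel (\<lambda>x. normal_density 0 \<sigma> x * x\<^sup>2) (\<sigma>\<^sup>2)"
      using normal_moment_even[OF sp, where k=1 and \<mu>=0] by (simp add: field_simps power2_eq_square)
    have d1: "has_bochner_integral (density lborel (normal_density 0 \<sigma>)) (\<lambda>x. x) 0"
      by (rule has_bochner_integral_density) (simp_all add: h1)
    have d2: "has_bochner_integral (density lborel (normal_density 0 \<sigma>)) (\<lambda>x. x\<^sup>2) (\<sigma>\<^sup>2)"
      by (rule has_bochner_integral_density) (simp_all add: h2)
    have nd: "noise_dist \<sigma> = density lborel (normal_density 0 \<sigma>)" using False by (simp add: noise_dist_def)
    have ps: "prob_space (density lborel (normal_density 0 \<sigma>))" by (rule prob_space_normal_density[OF sp])
    show ?thesis unfolding nd using d1 d2 ps unfolding has_bochner_integral_iff by blast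
  qed
  then show "prob_space (noise_dist \<sigma>)"
    and "integrable (noise_dist \<sigma>) (\<lambda>x. x)"
    and "(\<integral>x. x \<partial>noise_dist \<sigma>) = 0"
    and "integrable (noise_dist \<sigma>) (\<lambda>x. x\<^sup>2)"
    and "(\<integral>x. x\<^sup>2 \<partial>noise_dist \<sigma>) = \<sigma>\<^sup>2" by auto
qed

definition Unif :: "real measure" where "Unif = uniform_measure lborel {0..1::real}"

lemma Unif_facts:
  shows "prob_space Unif"
    and "0 \<le> q \<Longrightarrow> q \<le> 1 \<Longrightarrow> (\<integral>x. (if x \<le> q then 1 else 0) \<partial>Unif) = q"
    and "sets Unif = sets borel"
proof -
  show "prob_space Unif" unfolding Unif_def by (rule prob_space_uniform_measure) auto
  show "sets Unif = sets borel" unfolding Unif_def by simp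
  assume q: "0 \<le> q" "q \<le> 1"
  have "(\<lambda>x::real. if x \<le> q then 1 else 0::real) = indicator {..q}"
    by (auto simp: indicator_def)
  then have "(\<integral>x. (if x \<le> q then 1 else 0) \<partial>Unif) = measure Unif {..q}"
    by (simp add: Unif_def)
  also have "\<dots> = measure lborel ({0..1} \<inter> {..q}) / measure lborel {0..1::real}"
    unfolding Unif_def by (rule measure_uniform_measure) auto
  also have "{0..1} \<inter> {..q} = {0..q}" using q by auto
  finally show "(\<integral>x. (if x \<le> q then 1 else 0) \<partial>Unif) = q" using q by simp
qed



lemma lagrange_node:
  assumes inj: "inj_on p {..\<beta>}" and t: "t \<le> \<beta>" and r: "r \<le> \<beta>"
  shows "lagrange p \<beta> t (p r) = (if t = r then 1 else 0)"
proof (cases "t = r")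
  case True
  have "lagrange p \<beta> t (p r) = (\<Prod>s\<in>{..\<beta>} - {t}. 1)"
    unfolding lagrange_def True
  proof (rule prod.cong[OF refl])
    fix s assume "s \<in> {..\<beta>} - {r}"
    then have "p r \<noteq> p s" using inj r by (auto dest: inj_onD)
    then show "(p r - p s) / (p r - p s) = 1" by simp
  qed
  then show ?thesis using True by simp
next
  case False
  have "lagrange p \<beta> t (p r) = 0"
    unfolding lagrange_def
    by (rule prod_zero) (use False r in auto)
  then show ?thesis using False by simp
qed

lemma lagrange_interp:
  assumes inj: "inj_on p {..\<beta>}" and k: "k \<le> \<beta>"
  shows "(\<Sum>t\<le>\<beta>. lagrange p \<beta> t x * p t ^ k) = x ^ k"
proof -
  define L where "L t = (\<Prod>s\<in>{..\<beta>}-{t}. [:- p s / (p t - p s), 1 / (p t - p s):])" for t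
  have polyL: "poly (L t) y = lagrange p \<beta> t y" for t y
    unfolding L_def lagrange_def poly_prod
    by (rule prod.cong[OF refl]) (simp add: diff_divide_distrib)
  have degL: "degree (L t) \<le> \<beta>" if "t \<le> \<beta>" for t
  proof -
    have "degree (L t) \<le> (\<Sum>s\<in>{..\<beta>}-{t}. degree [:- p s / (p t - p s), 1 / (p t - p s):])"
      unfolding L_def using degree_prod_sum_le[of "{..\<beta>}-{t}"] unfolding o_def by blast
    also have "\<dots> \<le> (\<Sum>s\<in>{..\<beta>}-{t}. 1)"
      by (rule sum_mono) simp
    also have "\<dots> = \<beta>" using that by simp
    finally show ?thesis .
  qed
  define Q where "Q = (\<Sum>t\<le>\<beta>. smult (p t ^ k) (L t)) - monom 1 k"
  have polyQ: "poly Q y = (\<Sum>t\<le>\<beta>. lagrange p \<beta> t y * p t ^ k) - y ^ k" for y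
    unfolding Q_def by (simp add: poly_sum polyL poly_monom mult.commute)
  have degQ: "degree Q \<le> \<beta>"
  proof -
    have "degree (\<Sum>t\<le>\<beta>. smult (p t ^ k) (L t)) \<le> \<beta>"
      by (rule degree_sum_le) (use degL in \<open>auto intro: order.trans[OF degree_smult_le]\<close>)
    moreover have "degree (monom (1::real) k) \<le> \<beta>" using k by (simp add: degree_monom_eq)
    ultimately show ?thesis unfolding Q_def by (meson degree_diff_le)
  qed
  have roots: "poly Q (p r) = 0" if "r \<le> \<beta>" for r
  proof -
    have "(\<Sum>t\<le>\<beta>. lagrange p \<beta> t (p r) * p t ^ k) = (\<Sum>t\<le>\<beta>. if t = r then p t ^ k else 0)"
      by (rule sum.cong[OF refl]) (simp add: lagrange_node[OF inj _ that])
    also have "\<dots> = p r ^ k" using that by simp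
    finally show ?thesis by (simp add: polyQ)
  qed
  have "Q = 0"
  proof (rule ccontr)
    assume "Q \<noteq> 0"
    then have "card {y. poly Q y = 0} \<le> degree Q" by (rule card_poly_roots_bound)
    moreover have "card (p ` {..\<beta>}) \<le> card {y. poly Q y = 0}"
      by (rule card_mono) (use \<open>Q \<noteq> 0\<close> poly_roots_finite roots in auto)
    moreover have "card (p ` {..\<beta>}) = Suc \<beta>" using inj by (simp add: card_image)
    ultimately show False using degQ by simp
  qed
  then show ?thesis using polyQ[of x] by simp
qed

locale nodes =
  fixes p :: "nat \<Rightarrow> real" and \<beta> :: nat
  assumes p0: "p 0 = 0" and pinc: "\<forall>t<\<beta>. p t < p (Suc t)" and p1: "p \<beta> \<le> 1"
begin

lemma mono_lt: "s < t \<Longrightarrow> t \<le> \<beta> \<Longrightarrow> p s < p t"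
proof (induction t)
  case 0 then show ?case by simp
next
  case (Suc t)
  then have "p t < p (Suc t)" using pinc by simp
  then show ?case using Suc by (cases "s = t") auto
qed

lemma mono_le: "s \<le> t \<Longrightarrow> t \<le> \<beta> \<Longrightarrow> p s \<le> p t"
  using mono_lt by (cases "s = t") (auto simp: order.order_iff_strict)

lemma range01: "t \<le> \<beta> \<Longrightarrow> 0 \<le> p t \<and> p t \<le> 1"
  using mono_le[of 0 t] mono_le[of t \<beta>] p0 p1 by auto

lemma inj: "inj_on p {..\<beta>}"
proof (rule inj_onI)
  fix s t assume "s \<in> {..\<beta>}" "t \<in> {..\<beta>}" "p s = p t"
  then show "s = t" using mono_lt[of s t] mono_lt[of t s] by (metis atMost_iff less_irrefl nat_neq_iff)
qed

lemma delta_le: "1 \<le> t \<Longrightarrow> t \<le> \<beta> \<Longrightarrow> delta_p p \<beta> \<le> p t - p (t - 1)"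
  unfolding delta_p_def by (rule Min_le) auto

lemma delta_pos: "1 \<le> \<beta> \<Longrightarrow> delta_p p \<beta> > 0"
  unfolding delta_p_def
proof (subst Min_gr_iff)
  assume "1 \<le> \<beta>"
  show "finite ((\<lambda>t. p t - p (t - 1)) ` {1..\<beta>})" by simp
  show "(\<lambda>t. p t - p (t - 1)) ` {1..\<beta>} \<noteq> {}" using \<open>1 \<le> \<beta>\<close> by simp
  show "\<forall>a\<in>(\<lambda>t. p t - p (t - 1)) ` {1..\<beta>}. 0 < a"
    using mono_lt by auto
qed

lemma gap: "s \<le> \<beta> \<Longrightarrow> t \<le> \<beta> \<Longrightarrow> s \<noteq> t \<Longrightarrow> \<bar>p t - p s\<bar> \<ge> delta_p p \<beta>"
proof -
  have *: "p t - p s \<ge> delta_p p \<beta>" if "s < t" "t \<le> \<beta>" for s t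
  proof -
    have "delta_p p \<beta> \<le> p t - p (t - 1)" using that by (intro delta_le) auto
    moreover have "p s \<le> p (t - 1)" using that by (intro mono_le) auto
    ultimately show ?thesis by simp
  qed
  assume "s \<le> \<beta>" "t \<le> \<beta>" "s \<noteq> t"
  then show ?thesis using *[of s t] *[of t s] by (cases "s < t") auto
qed

lemma lagrange_bound:
  assumes b: "1 \<le> \<beta>" and t: "t \<le> \<beta>" and x: "0 \<le> x" "x \<le> 1"
  shows "\<bar>lagrange p \<beta> t x\<bar> \<le> (1 / delta_p p \<beta>) ^ \<beta>"
proof -
  have dp: "delta_p p \<beta> > 0" using delta_pos b by simp
  have "\<bar>lagrange p \<beta> t x\<bar> = (\<Prod>s\<in>{..\<beta>} - {t}. \<bar>(x - p s) / (p t - p s)\<bar>)"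
    unfolding lagrange_def by (rule abs_prod)
  also have "\<dots> \<le> (\<Prod>s\<in>{..\<beta>} - {t}. 1 / delta_p p \<beta>)"
  proof (rule prod_mono)
    fix s assume "s \<in> {..\<beta>} - {t}"
    then have s: "s \<in> {..\<beta>}" "s \<noteq> t" by auto
    have g: "\<bar>p t - p s\<bar> \<ge> delta_p p \<beta>" using gap[of s t] s t by auto
    have xs: "\<bar>x - p s\<bar> \<le> 1" using range01[of s] s x by auto
    have "\<bar>(x - p s) / (p t - p s)\<bar> = \<bar>x - p s\<bar> / \<bar>p t - p s\<bar>" by (simp add: abs_divide)
    also have "\<dots> \<le> 1 / \<bar>p t - p s\<bar>" using xs by (intro divide_right_mono) auto
    also have "\<dots> \<le> 1 / delta_p p \<beta>" using g dp by (intro divide_left_mono) auto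
    finally show "0 \<le> \<bar>(x - p s) / (p t - p s)\<bar> \<and> \<bar>(x - p s) / (p t - p s)\<bar> \<le> 1 / delta_p p \<beta>" by simp
  qed
  also have "\<dots> = (1 / delta_p p \<beta>) ^ \<beta>" using t by simp
  finally show ?thesis .
qed

definition coef :: "nat \<Rightarrow> real" where "coef t = lagrange p \<beta> t 1 - lagrange p \<beta> t 0"

lemma coef_interp: "k \<le> \<beta> \<Longrightarrow> (\<Sum>t\<le>\<beta>. coef t * p t ^ k) = 1 - 0 ^ k"
  unfolding coef_def left_diff_distrib sum_subtractf
  using lagrange_interp[OF inj, of k 1] lagrange_interp[OF inj, of k 0] by simp

lemma coef_zero: "\<beta> = 0 \<Longrightarrow> t \<le> \<beta> \<Longrightarrow> coef t = 0"
proof -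
  assume "\<beta> = 0" "t \<le> \<beta>"
  then have e: "{..\<beta>} - {t} = {}" by auto
  show ?thesis by (simp only: coef_def lagrange_def e prod.empty diff_self)
qed

lemma coef_bound: "t \<le> \<beta> \<Longrightarrow> \<bar>coef t\<bar> \<le> 2 / delta_p p \<beta> ^ \<beta>"
proof (cases "\<beta> = 0")
  case True
  assume "t \<le> \<beta>"
  have "coef t = 0" using coef_zero[OF True \<open>t \<le> \<beta>\<close>] .
  moreover have "delta_p p \<beta> ^ \<beta> = 1" using True by simp
  ultimately show ?thesis by simp
next
  case False
  assume t: "t \<le> \<beta>"
  have "\<bar>coef t\<bar> \<le> \<bar>lagrange p \<beta> t 1\<bar> + \<bar>lagrange p \<beta> t 0\<bar>" unfolding coef_def by simp
  also have "\<dots> \<le> (1 / delta_p p \<beta>) ^ \<beta> + (1 / delta_p p \<beta>) ^ \<beta>"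
    using lagrange_bound[OF _ t, of 1] lagrange_bound[OF _ t, of 0] False by (intro add_mono) auto
  finally show ?thesis by (simp add: power_divide)
qed

lemma sum_abs_coef: "(\<Sum>t\<le>\<beta>. \<bar>coef t\<bar>) \<le> 4 * real \<beta> / delta_p p \<beta> ^ \<beta>"
proof (cases "\<beta> = 0")
  case True
  have "\<forall>t\<in>{..\<beta>}. coef t = 0" using coef_zero[OF True] by auto
  then show ?thesis using True by simp
next
  case False
  have "(\<Sum>t\<le>\<beta>. \<bar>coef t\<bar>) \<le> (\<Sum>t\<le>\<beta>. 2 / delta_p p \<beta> ^ \<beta>)"
    by (rule sum_mono) (simp add: coef_bound)
  also have "\<dots> = (real \<beta> + 1) * (2 / delta_p p \<beta> ^ \<beta>)" by simp
  also have "\<dots> \<le> (2 * real \<beta>) * (2 / delta_p p \<beta> ^ \<beta>)"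
    using False delta_pos[of] by (intro mult_right_mono) auto
  finally show ?thesis by simp
qed

lemma sum_sq_coef: "(\<Sum>t\<le>\<beta>. (coef t)\<^sup>2) \<le> 8 * real \<beta> / delta_p p \<beta> ^ (2 * \<beta>)"
proof (cases "\<beta> = 0")
  case True
  have "\<forall>t\<in>{..\<beta>}. coef t = 0" using coef_zero[OF True] by auto
  then show ?thesis using True by simp
next
  case False
  have sq: "(coef t)\<^sup>2 \<le> 4 / delta_p p \<beta> ^ (2 * \<beta>)" if "t \<le> \<beta>" for t
  proof -
    have "(coef t)\<^sup>2 = \<bar>coef t\<bar>\<^sup>2" by simp
    also have "\<dots> \<le> (2 / delta_p p \<beta> ^ \<beta>)\<^sup>2"
      using coef_bound[OF that] by (intro power_mono) auto
    also have "\<dots> = 4 / delta_p p \<beta> ^ (2 * \<beta>)" by (simp add: power_divide power_mult[symmetric] mult.commute)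
    finally show ?thesis .
  qed
  have "(\<Sum>t\<le>\<beta>. (coef t)\<^sup>2) \<le> (\<Sum>t\<le>\<beta>. 4 / delta_p p \<beta> ^ (2 * \<beta>))"
    by (rule sum_mono) (simp add: sq)
  also have "\<dots> = (real \<beta> + 1) * (4 / delta_p p \<beta> ^ (2 * \<beta>))" by simp
  also have "\<dots> \<le> (2 * real \<beta>) * (4 / delta_p p \<beta> ^ (2 * \<beta>))"
    using False delta_pos by (intro mult_right_mono) auto
  finally show ?thesis by simp
qed

end



locale model = nodes p \<beta> for p \<beta> +
  fixes n :: nat and E :: "(nat \<times> nat) set" and c :: "nat \<Rightarrow> nat set \<Rightarrow> real"
  assumes npos: "n > 0" and Esub: "E \<subseteq> {..<n} \<times> {..<n}"
begin

abbreviation "NS i \<equiv> {S. S \<subseteq> in_nbhd E i \<and> card S \<le> \<beta>}"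
abbreviation "U \<equiv> PiM {..<n} (\<lambda>_. Unif)"

lemma nbhd_sub: "in_nbhd E i \<subseteq> {..<n}"
  using Esub by (auto simp: in_nbhd_def)

lemma nbhd_fin: "finite (in_nbhd E i)"
  using nbhd_sub finite_subset by blast

lemma NS_fin: "finite (NS i)"
  by (rule finite_subset[of _ "Pow (in_nbhd E i)"]) (use nbhd_fin in auto)

definition Z :: "nat \<Rightarrow> nat \<Rightarrow> (nat \<Rightarrow> real) \<Rightarrow> real" where
  "Z i t u = Ypot E \<beta> c i (treat p u t)"

definition f :: "nat \<Rightarrow> (nat \<Rightarrow> real) \<Rightarrow> real" where
  "f i u = (\<Sum>t\<le>\<beta>. coef t * Z i t u)"

lemma treat_meas:
  assumes "j \<in> J"
  shows "(\<lambda>u. treat p u t j) \<in> borel_measurable (PiM J (\<lambda>_. Unif))"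
proof -
  have m: "(\<lambda>u. u j) \<in> borel_measurable (PiM J (\<lambda>_. Unif))"
    using measurable_component_singleton[OF assms, of "\<lambda>_. Unif"]
          measurable_cong_sets[OF refl Unif_facts(3), of "PiM J (\<lambda>_. Unif)"] by simp
  show ?thesis unfolding treat_def using m by measurable
qed

lemma Z_meas:
  assumes "in_nbhd E i \<subseteq> J"
  shows "Z i t \<in> borel_measurable (PiM J (\<lambda>_. Unif))"
  unfolding Z_def Ypot_def
  by (intro borel_measurable_sum borel_measurable_times borel_measurable_const borel_measurable_prod
            treat_meas) (use assms in auto)

lemma f_meas:
  assumes "in_nbhd E i \<subseteq> J"
  shows "f i \<in> borel_measurable (PiM J (\<lambda>_. Unif))"
  unfolding f_def
  by (intro borel_measurable_sum borel_measurable_times borel_measurable_const Z_meas assms)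


lemma U_prob: "prob_space U"
  by (rule prob_space_PiM) (simp add: Unif_facts(1))

lemma treat01: "treat p u t j = 0 \<or> treat p u t j = 1"
  by (simp add: treat_def)

lemma abs_prod_treat: "\<bar>\<Prod>j\<in>S. treat p u t j\<bar> \<le> 1"
proof -
  have "\<bar>\<Prod>j\<in>S. treat p u t j\<bar> = (\<Prod>j\<in>S. \<bar>treat p u t j\<bar>)" by (rule abs_prod)
  also have "\<dots> \<le> (\<Prod>j\<in>S. 1)"
    by (rule prod_mono) (auto simp: treat_def)
  finally show ?thesis by simp
qed

lemma Ybound: "i < n \<Longrightarrow> (\<Sum>S\<in>NS i. \<bar>c i S\<bar>) \<le> Ymax n E \<beta> c"
  unfolding Ymax_def by (rule Max_ge) simp_all

lemma Ymax_nonneg: "0 \<le> Ymax n E \<beta> c"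
proof -
  have "0 \<le> (\<Sum>S\<in>NS 0. \<bar>c 0 S\<bar>)" by (rule sum_nonneg) simp
  then show ?thesis using Ybound[OF npos] by linarith
qed

lemma Z_bound: "i < n \<Longrightarrow> \<bar>Z i t u\<bar> \<le> Ymax n E \<beta> c"
proof -
  assume i: "i < n"
  have "\<bar>Z i t u\<bar> \<le> (\<Sum>S\<in>NS i. \<bar>c i S * (\<Prod>j\<in>S. treat p u t j)\<bar>)"
    unfolding Z_def Ypot_def by (rule sum_abs)
  also have "\<dots> \<le> (\<Sum>S\<in>NS i. \<bar>c i S\<bar>)"
    by (rule sum_mono) (simp add: abs_mult mult_left_le abs_prod_treat)
  also have "\<dots> \<le> Ymax n E \<beta> c" using Ybound i .
  finally show ?thesis .
qed

abbreviation "K \<equiv> (\<Sum>t\<le>\<beta>. \<bar>coef t\<bar>)"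

lemma f_bound: "i < n \<Longrightarrow> \<bar>f i u\<bar> \<le> K * Ymax n E \<beta> c"
proof -
  assume i: "i < n"
  have "\<bar>f i u\<bar> \<le> (\<Sum>t\<le>\<beta>. \<bar>coef t * Z i t u\<bar>)"
    unfolding f_def by (rule sum_abs)
  also have "\<dots> \<le> (\<Sum>t\<le>\<beta>. \<bar>coef t\<bar> * Ymax n E \<beta> c)"
    by (rule sum_mono) (simp add: abs_mult mult_left_mono Z_bound i)
  also have "\<dots> = K * Ymax n E \<beta> c" by (simp add: sum_distrib_right)
  finally show ?thesis .
qed

lemma prod_treat_integral:
  assumes "S \<subseteq> in_nbhd E i" "t \<le> \<beta>"
  shows "(\<integral>u. (\<Prod>j\<in>S. treat p u t j) \<partial>U) = p t ^ card S"
    and "integrable U (\<lambda>u. \<Prod>j\<in>S. treat p u t j)"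
proof -
  have S: "finite S" "S \<subseteq> {..<n}" using assms nbhd_sub[of i] nbhd_fin[of i] finite_subset by auto
  have g: "integrable Unif (\<lambda>x. if x \<le> p t then 1 else 0::real)"
  proof -
    interpret prob_space Unif by (rule Unif_facts(1))
    show ?thesis
      by (rule integrable_const_bound[where B=1]) (auto simp: measurable_cong_sets[OF Unif_facts(3) refl])
  qed
  have tr: "treat p u t j = (if u j \<le> p t then 1 else 0)" for u j by (simp add: treat_def)
  show "(\<integral>u. (\<Prod>j\<in>S. treat p u t j) \<partial>U) = p t ^ card S"
    unfolding tr
    using prod_coord_integral(1)[OF Unif_facts(1) S, of "\<lambda>_ x. if x \<le> p t then 1 else 0"] g
      Unif_facts(2)[of "p t"] range01[OF assms(2)] by simp
  show "integrable U (\<lambda>u. \<Prod>j\<in>S. treat p u t j)"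
    unfolding tr
    using prod_coord_integral(2)[OF Unif_facts(1) S, of "\<lambda>_ x. if x \<le> p t then 1 else 0"] g by simp
qed

lemma Z_integral:
  assumes "t \<le> \<beta>"
  shows "(\<integral>u. Z i t u \<partial>U) = (\<Sum>S\<in>NS i. c i S * p t ^ card S)"
    and "integrable U (Z i t)"
proof -
  have int: "integrable U (\<lambda>u. c i S * (\<Prod>j\<in>S. treat p u t j))" if "S \<in> NS i" for S
    using prod_treat_integral(2)[of S i t] that assms by simp
  show "(\<integral>u. Z i t u \<partial>U) = (\<Sum>S\<in>NS i. c i S * p t ^ card S)"
    unfolding Z_def Ypot_def
    by (subst Bochner_Integration.integral_sum[OF int], assumption)
       (rule sum.cong[OF refl], use prod_treat_integral(1) assms in auto)
  show "integrable U (Z i t)"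
    unfolding Z_def Ypot_def using int by (intro Bochner_Integration.integrable_sum) auto
qed

lemma f_integral:
  shows "(\<integral>u. f i u \<partial>U) = Ypot E \<beta> c i (\<lambda>_. 1) - Ypot E \<beta> c i (\<lambda>_. 0)"
    and "integrable U (f i)"
proof -
  have "(\<integral>u. f i u \<partial>U) = (\<Sum>t\<le>\<beta>. coef t * (\<Sum>S\<in>NS i. c i S * p t ^ card S))"
    unfolding f_def using Z_integral by (subst Bochner_Integration.integral_sum) auto
  also have "\<dots> = (\<Sum>S\<in>NS i. c i S * (\<Sum>t\<le>\<beta>. coef t * p t ^ card S))"
    by (simp add: sum_distrib_left sum_distrib_right mult_ac sum.swap[of _ "{..\<beta>}"])
  also have "\<dots> = (\<Sum>S\<in>NS i. c i S * (1 - 0 ^ card S))"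
    by (rule sum.cong[OF refl]) (simp add: coef_interp)
  also have "\<dots> = Ypot E \<beta> c i (\<lambda>_. 1) - Ypot E \<beta> c i (\<lambda>_. 0)"
    unfolding Ypot_def by (simp add: sum_subtractf right_diff_distrib)
  finally show "(\<integral>u. f i u \<partial>U) = Ypot E \<beta> c i (\<lambda>_. 1) - Ypot E \<beta> c i (\<lambda>_. 0)" .
  show "integrable U (f i)" unfolding f_def using Z_integral by auto
qed

lemma f_local: "f i u = f i (restrict u (in_nbhd E i))"
  unfolding f_def Z_def Ypot_def treat_def
  by (intro sum.cong refl arg_cong2[where f="(*)"] prod.cong) auto


definition g :: "nat \<Rightarrow> (nat \<Rightarrow> real) \<Rightarrow> real" where
  "g i u = f i u - (\<integral>v. f i v \<partial>U)"

lemma g_integral: "integrable U (g i)" "(\<integral>u. g i u \<partial>U) = 0"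
proof -
  interpret U: prob_space U by (rule U_prob)
  show "integrable U (g i)" unfolding g_def using f_integral(2) by simp
  show "(\<integral>u. g i u \<partial>U) = 0" unfolding g_def
    using f_integral(2)[of i] by (simp add: U.prob_space)
qed

lemma g_meas: "in_nbhd E i \<subseteq> J \<Longrightarrow> g i \<in> borel_measurable (PiM J (\<lambda>_. Unif))"
  unfolding g_def by (intro borel_measurable_diff f_meas borel_measurable_const)

lemma g_local: "g i u = g i (restrict u (in_nbhd E i))"
  unfolding g_def using f_local by simp

lemma indep_pair:
  assumes disj: "in_nbhd E i \<inter> in_nbhd E i' = {}"
  shows "(\<integral>u. g i u * g i' u \<partial>U) = 0"
proof -
  interpret U: prob_space U by (rule U_prob)
  have ind0: "U.indep_vars (\<lambda>_. Unif) (\<lambda>j \<omega>. \<omega> j) {..<n}"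
    by (rule coord_indep[OF Unif_facts(1)])
  have iv: "U.indep_var (PiM (in_nbhd E i) (\<lambda>_. Unif)) (\<lambda>\<omega>. restrict \<omega> (in_nbhd E i))
                        (PiM (in_nbhd E i') (\<lambda>_. Unif)) (\<lambda>\<omega>. restrict \<omega> (in_nbhd E i'))"
    using U.indep_var_restrict[OF ind0 disj nbhd_sub nbhd_sub] by simp
  have iv2: "U.indep_var borel (g i \<circ> (\<lambda>\<omega>. restrict \<omega> (in_nbhd E i)))
                        borel (g i' \<circ> (\<lambda>\<omega>. restrict \<omega> (in_nbhd E i')))"
    by (rule U.indep_var_compose[OF iv g_meas g_meas]) auto
  have e1: "g i \<circ> (\<lambda>\<omega>. restrict \<omega> (in_nbhd E i)) = g i"
    by (rule ext) (simp add: g_local[symmetric])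
  have e2: "g i' \<circ> (\<lambda>\<omega>. restrict \<omega> (in_nbhd E i')) = g i'"
    by (rule ext) (simp add: g_local[symmetric])
  have iv3: "U.indep_var borel (g i) borel (g i')" using iv2 unfolding e1 e2 .
  show ?thesis
    using U.indep_var_lebesgue_integral[OF iv3 g_integral(1) g_integral(1)] g_integral(2) by simp
qed


abbreviation "d \<equiv> max_degree n E"

lemma in_deg_le: "i < n \<Longrightarrow> card (in_nbhd E i) \<le> d"
  unfolding max_degree_def by (rule max.coboundedI1, rule Max_ge) simp_all

lemma out_deg_le: "j < n \<Longrightarrow> card (out_nbhd E j) \<le> d"
  unfolding max_degree_def by (rule max.coboundedI2, rule Max_ge) simp_all

definition P :: "(nat \<times> nat) set" where
  "P = {x \<in> {..<n} \<times> {..<n}. in_nbhd E (fst x) \<inter> in_nbhd E (snd x) \<noteq> {}}"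

lemma P_card: "card P \<le> n * d * d"
proof -
  have sub: "P \<subseteq> (\<Union>i\<in>{..<n}. \<Union>j\<in>in_nbhd E i. Pair i ` out_nbhd E j)"
  proof
    fix x assume "x \<in> P"
    then have x1: "fst x < n" and "in_nbhd E (fst x) \<inter> in_nbhd E (snd x) \<noteq> {}"
      unfolding P_def by auto
    then obtain j where j: "j \<in> in_nbhd E (fst x)" "j \<in> in_nbhd E (snd x)" by blast
    have "x \<in> Pair (fst x) ` out_nbhd E j" using j(2) by (auto simp: in_nbhd_def out_nbhd_def image_iff)
    then show "x \<in> (\<Union>i\<in>{..<n}. \<Union>j\<in>in_nbhd E i. Pair i ` out_nbhd E j)"
      using x1 j(1) by blast
  qed
  have fin: "finite (Pair i ` out_nbhd E j)" for i j
  proof -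
    have "out_nbhd E j \<subseteq> {..<n}" using Esub by (auto simp: out_nbhd_def)
    then show ?thesis using finite_subset by blast
  qed
  have "card P \<le> card (\<Union>i\<in>{..<n}. \<Union>j\<in>in_nbhd E i. Pair i ` out_nbhd E j)"
    by (rule card_mono[OF _ sub]) (use fin nbhd_fin in auto)
  also have "\<dots> \<le> (\<Sum>i<n. card (\<Union>j\<in>in_nbhd E i. Pair i ` out_nbhd E j))"
    by (rule card_UN_le) simp
  also have "\<dots> \<le> (\<Sum>i<n. d * d)"
  proof (rule sum_mono)
    fix i assume i: "i \<in> {..<n}"
    have "card (\<Union>j\<in>in_nbhd E i. Pair i ` out_nbhd E j) \<le> (\<Sum>j\<in>in_nbhd E i. card (Pair i ` out_nbhd E j))"
      by (rule card_UN_le) (rule nbhd_fin)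
    also have "\<dots> \<le> (\<Sum>j\<in>in_nbhd E i. d)"
    proof (rule sum_mono)
      fix j assume "j \<in> in_nbhd E i"
      then have "j < n" using nbhd_sub by auto
      then show "card (Pair i ` out_nbhd E j) \<le> d"
        using card_image_le[of "out_nbhd E j" "Pair i"] out_deg_le fin
        by (metis card_image inj_on_def prod.inject)
    qed
    also have "\<dots> = card (in_nbhd E i) * d" by simp
    also have "\<dots> \<le> d * d" using in_deg_le i by simp
    finally show "card (\<Union>j\<in>in_nbhd E i. Pair i ` out_nbhd E j) \<le> d * d" .
  qed
  also have "\<dots> = n * d * d" by simp
  finally show ?thesis .
qed


abbreviation "Y \<equiv> Ymax n E \<beta> c"

lemma K_nonneg: "0 \<le> K" by (rule sum_nonneg) simp

lemma g_bound: "i < n \<Longrightarrow> \<bar>g i u\<bar> \<le> 2 * K * Y"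
proof -
  assume i: "i < n"
  interpret U: prob_space U by (rule U_prob)
  have "\<bar>\<integral>v. f i v \<partial>U\<bar> \<le> (\<integral>v. \<bar>f i v\<bar> \<partial>U)" by (rule integral_abs_bound)
  also have "\<dots> \<le> K * Y"
    by (rule U.integral_le_const) (use f_integral(2) f_bound i in auto)
  finally have "\<bar>\<integral>v. f i v \<partial>U\<bar> \<le> K * Y" .
  then show ?thesis unfolding g_def using f_bound[OF i, of u] by linarith
qed

lemma gg_bound: "i < n \<Longrightarrow> i' < n \<Longrightarrow> \<bar>g i x * g i' x\<bar> \<le> (2 * K * Y) * (2 * K * Y)"
proof -
  assume i: "i < n" "i' < n"
  have a: "\<bar>g i x\<bar> \<le> 2 * K * Y" "\<bar>g i' x\<bar> \<le> 2 * K * Y" using g_bound i by auto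
  have nn: "0 \<le> 2 * K * Y" using a(1) by linarith
  have "\<bar>g i x\<bar> * \<bar>g i' x\<bar> \<le> (2 * K * Y) * (2 * K * Y)"
    by (rule mult_mono[OF a(1) a(2) nn abs_ge_zero])
  then show ?thesis by (simp only: abs_mult)
qed

lemma gg_integrable: "i < n \<Longrightarrow> i' < n \<Longrightarrow> integrable U (\<lambda>u. g i u * g i' u)"
proof -
  assume i: "i < n" "i' < n"
  interpret U: prob_space U by (rule U_prob)
  show ?thesis
  proof (rule U.integrable_const_bound[where B="(2 * K * Y) * (2 * K * Y)"])
    have "norm (g i x * g i' x) \<le> (2 * K * Y) * (2 * K * Y)" for x
      using gg_bound[of i i' x] i unfolding real_norm_def by blast
    then show "AE x in U. norm (g i x * g i' x) \<le> (2 * K * Y) * (2 * K * Y)" by simp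
    show "(\<lambda>u. g i u * g i' u) \<in> borel_measurable U"
      using g_meas[of i "{..<n}"] g_meas[of i' "{..<n}"] nbhd_sub by measurable
  qed
qed

definition F :: "(nat \<Rightarrow> real) \<Rightarrow> real" where
  "F u = (\<Sum>t\<le>\<beta>. coef t * ((1 / real n) * (\<Sum>i<n. Z i t u)))"

lemma F_minus: "F u - TTE n E \<beta> c = (1 / real n) * (\<Sum>i<n. g i u)"
proof -
  have "F u = (1 / real n) * (\<Sum>i<n. f i u)"
  proof -
    have "F u = (1 / real n) * (\<Sum>t\<le>\<beta>. \<Sum>i<n. coef t * Z i t u)"
      unfolding F_def by (simp add: sum_distrib_left)
    also have "(\<Sum>t\<le>\<beta>. \<Sum>i<n. coef t * Z i t u) = (\<Sum>i<n. \<Sum>t\<le>\<beta>. coef t * Z i t u)"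
      by (rule sum.swap)
    finally show ?thesis unfolding f_def .
  qed
  moreover have "TTE n E \<beta> c = (1 / real n) * (\<Sum>i<n. \<integral>v. f i v \<partial>U)"
    unfolding TTE_def f_integral(1) ..
  ultimately show ?thesis unfolding g_def by (simp add: sum_subtractf right_diff_distrib)
qed

lemma var_u: "(\<integral>u. (F u - TTE n E \<beta> c)\<^sup>2 \<partial>U) \<le> 4 * real d ^ 2 * K\<^sup>2 * Y\<^sup>2 / real n"
proof -
  interpret U: prob_space U by (rule U_prob)
  let ?B = "(2 * K * Y) * (2 * K * Y)"
  have sq: "(F u - TTE n E \<beta> c)\<^sup>2 = (1 / real n)\<^sup>2 * (\<Sum>i<n. \<Sum>i'<n. g i u * g i' u)" for u
  proof -
    have "(\<Sum>i<n. g i u) * (\<Sum>i<n. g i u) = (\<Sum>i<n. \<Sum>i'<n. g i u * g i' u)" by (rule sum_product)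
    then show ?thesis unfolding F_minus power2_eq_square by (simp only: mult_ac)
  qed
  have eq1: "(\<integral>u. (F u - TTE n E \<beta> c)\<^sup>2 \<partial>U) = (1 / real n)\<^sup>2 * (\<Sum>i<n. \<Sum>i'<n. \<integral>u. g i u * g i' u \<partial>U)"
  proof -
    have "(\<integral>u. (\<Sum>i<n. \<Sum>i'<n. g i u * g i' u) \<partial>U) = (\<Sum>i<n. \<integral>u. (\<Sum>i'<n. g i u * g i' u) \<partial>U)"
      by (rule Bochner_Integration.integral_sum) (use gg_integrable in auto)
    also have "\<dots> = (\<Sum>i<n. \<Sum>i'<n. \<integral>u. g i u * g i' u \<partial>U)"
      by (rule sum.cong[OF refl], rule Bochner_Integration.integral_sum) (use gg_integrable in auto)
    finally show ?thesis unfolding sq by simp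
  qed
  have le1: "(\<Sum>i<n. \<Sum>i'<n. \<integral>u. g i u * g i' u \<partial>U) \<le> (\<Sum>i<n. \<Sum>i'<n. if (i, i') \<in> P then ?B else 0)"
  proof (intro sum_mono)
    fix i i' assume i: "i \<in> {..<n}" "i' \<in> {..<n}"
    show "(\<integral>u. g i u * g i' u \<partial>U) \<le> (if (i, i') \<in> P then ?B else 0)"
    proof (cases "(i, i') \<in> P")
      case True
      have "(\<integral>u. g i u * g i' u \<partial>U) \<le> ?B"
      proof (rule U.integral_le_const)
        show "integrable U (\<lambda>u. g i u * g i' u)" using gg_integrable i by auto
        have "g i u * g i' u \<le> ?B" for u using gg_bound[of i i' u] i abs_le_D1 by blast
        then show "AE u in U. g i u * g i' u \<le> ?B" by simp
      qed
      then show ?thesis using True by simp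
    next
      case False
      then have "in_nbhd E i \<inter> in_nbhd E i' = {}" using i unfolding P_def by auto
      then show ?thesis using False indep_pair by simp
    qed
  qed
  have eq2: "(\<Sum>i<n. \<Sum>i'<n. if (i, i') \<in> P then ?B else 0) = real (card P) * ?B"
  proof -
    have "(\<Sum>i<n. \<Sum>i'<n. if (i, i') \<in> P then ?B else 0) = (\<Sum>x\<in>{..<n} \<times> {..<n}. if x \<in> P then ?B else 0)"
      by (simp add: sum.cartesian_product)
    also have "\<dots> = (\<Sum>x\<in>P. ?B)"
    proof -
      have "P \<subseteq> {..<n} \<times> {..<n}" unfolding P_def by auto
      then show ?thesis by (simp add: sum.If_cases Int_absorb1 Int_absorb2)
    qed
    finally show ?thesis by simp
  qed
  have Bnn: "0 \<le> ?B" by (rule zero_le_square)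
  have cP: "real (card P) \<le> real n * real d * real d" using P_card
    by (metis of_nat_le_iff of_nat_mult)
  have "(\<integral>u. (F u - TTE n E \<beta> c)\<^sup>2 \<partial>U) \<le> (1 / real n)\<^sup>2 * (real (card P) * ?B)"
    unfolding eq1 eq2[symmetric] by (rule mult_left_mono[OF le1]) simp
  also have "\<dots> \<le> (1 / real n)\<^sup>2 * ((real n * real d * real d) * ?B)"
    by (intro mult_left_mono mult_right_mono cP Bnn) simp
  also have "\<dots> = 4 * real d ^ 2 * K\<^sup>2 * Y\<^sup>2 / real n"
    using npos by (simp add: field_simps power2_eq_square)
  finally show ?thesis .
qed

lemma F_integrable: "integrable U F"
  unfolding F_def using Z_integral(2)
  by (intro Bochner_Integration.integrable_sum integrable_mult_right) auto

lemma F_integral: "(\<integral>u. F u \<partial>U) = TTE n E \<beta> c"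
proof -
  interpret U: prob_space U by (rule U_prob)
  have "F u = TTE n E \<beta> c + (1 / real n) * (\<Sum>i<n. g i u)" for u using F_minus[of u] by simp
  then have "(\<integral>u. F u \<partial>U) = (\<integral>u. TTE n E \<beta> c + (1 / real n) * (\<Sum>i<n. g i u) \<partial>U)" by simp
  also have "\<dots> = TTE n E \<beta> c + (1 / real n) * (\<Sum>i<n. \<integral>u. g i u \<partial>U)"
    using g_integral(1) by (simp add: Bochner_Integration.integral_sum U.prob_space)
  also have "\<dots> = TTE n E \<beta> c" using g_integral(2) by simp
  finally show ?thesis .
qed

lemma Fsq_integrable: "integrable U (\<lambda>u. (F u - TTE n E \<beta> c)\<^sup>2)"
proof -
  have sq: "(F u - TTE n E \<beta> c)\<^sup>2 = (1 / real n)\<^sup>2 * (\<Sum>i<n. \<Sum>i'<n. g i u * g i' u)" for u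
  proof -
    have "(\<Sum>i<n. g i u) * (\<Sum>i<n. g i u) = (\<Sum>i<n. \<Sum>i'<n. g i u * g i' u)" by (rule sum_product)
    then show ?thesis unfolding F_minus power2_eq_square by (simp only: mult_ac)
  qed
  show ?thesis unfolding sq using gg_integrable
    by (intro integrable_mult_right Bochner_Integration.integrable_sum) auto
qed

end

lemma noise_lin:
  fixes w :: "'i \<Rightarrow> real"
  assumes s: "\<sigma> \<ge> 0" and J: "finite J"
  defines "W \<equiv> PiM J (\<lambda>_. noise_dist \<sigma>)"
  shows "integrable W (\<lambda>e. \<Sum>k\<in>J. w k * e k)"
    and "(\<integral>e. (\<Sum>k\<in>J. w k * e k) \<partial>W) = 0"
    and "integrable W (\<lambda>e. (\<Sum>k\<in>J. w k * e k)\<^sup>2)"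
    and "(\<integral>e. (\<Sum>k\<in>J. w k * e k)\<^sup>2 \<partial>W) = \<sigma>\<^sup>2 * (\<Sum>k\<in>J. (w k)\<^sup>2)"
proof -
  note D = noise_facts[OF s]
  have m1: "(\<lambda>x::real. x) \<in> borel_measurable (noise_dist \<sigma>)"
    using borel_measurable_integrable[OF D(2)] .
  have m2: "(\<lambda>x::real. x\<^sup>2) \<in> borel_measurable (noise_dist \<sigma>)"
    using borel_measurable_integrable[OF D(4)] .
  have i1: "integrable W (\<lambda>e. e k)" if "k \<in> J" for k
    using coord_integral(2)[OF D(1) that m1] D(2) unfolding W_def by simp
  have e1: "(\<integral>e. e k \<partial>W) = 0" if "k \<in> J" for k
    using coord_integral(1)[OF D(1) that m1] D(3) unfolding W_def by simp
  have i2: "integrable W (\<lambda>e. e k * e k')" if "k \<in> J" "k' \<in> J" for k k'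
  proof (cases "k = k'")
    case True
    then show ?thesis using coord_integral(2)[OF D(1) that(1) m2] D(4) unfolding W_def
      by (simp add: power2_eq_square)
  next
    case False
    have "integrable W (\<lambda>e. \<Prod>j\<in>{k, k'}. e j)"
      using prod_coord_integral(2)[OF D(1), of "{k, k'}" J "\<lambda>_ x. x"] that D(2) unfolding W_def by simp
    then show ?thesis using False by simp
  qed
  have e2: "(\<integral>e. e k * e k' \<partial>W) = (if k = k' then \<sigma>\<^sup>2 else 0)" if "k \<in> J" "k' \<in> J" for k k'
  proof (cases "k = k'")
    case True
    then show ?thesis using coord_integral(1)[OF D(1) that(1) m2] D(5) unfolding W_def
      by (simp add: power2_eq_square)
  next
    case False
    have "(\<integral>e. (\<Prod>j\<in>{k, k'}. e j) \<partial>W) = (\<Prod>j\<in>{k, k'}. \<integral>x. x \<partial>noise_dist \<sigma>)"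
      using prod_coord_integral(1)[OF D(1), of "{k, k'}" J "\<lambda>_ x. x"] that D(2) unfolding W_def by simp
    then show ?thesis using False D(3) by simp
  qed
  show "integrable W (\<lambda>e. \<Sum>k\<in>J. w k * e k)" using i1 by auto
  show "(\<integral>e. (\<Sum>k\<in>J. w k * e k) \<partial>W) = 0"
    by (subst Bochner_Integration.integral_sum) (use i1 e1 in auto)
  have sq: "(\<Sum>k\<in>J. w k * e k)\<^sup>2 = (\<Sum>k\<in>J. \<Sum>k'\<in>J. (w k * w k') * (e k * e k'))" for e :: "'i \<Rightarrow> real"
    unfolding power2_eq_square sum_product by (simp only: mult_ac)
  show "integrable W (\<lambda>e. (\<Sum>k\<in>J. w k * e k)\<^sup>2)"
    unfolding sq using i2 by (intro Bochner_Integration.integrable_sum integrable_mult_right) auto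
  have "(\<integral>e. (\<Sum>k\<in>J. w k * e k)\<^sup>2 \<partial>W) = (\<Sum>k\<in>J. \<Sum>k'\<in>J. (w k * w k') * (if k = k' then \<sigma>\<^sup>2 else 0))"
  proof -
    have "(\<integral>e. (\<Sum>k\<in>J. \<Sum>k'\<in>J. (w k * w k') * (e k * e k')) \<partial>W)
        = (\<Sum>k\<in>J. \<integral>e. (\<Sum>k'\<in>J. (w k * w k') * (e k * e k')) \<partial>W)"
      by (rule Bochner_Integration.integral_sum) (use i2 in auto)
    also have "\<dots> = (\<Sum>k\<in>J. \<Sum>k'\<in>J. \<integral>e. (w k * w k') * (e k * e k') \<partial>W)"
      by (rule sum.cong[OF refl], rule Bochner_Integration.integral_sum) (use i2 in auto)
    also have "\<dots> = (\<Sum>k\<in>J. \<Sum>k'\<in>J. (w k * w k') * (if k = k' then \<sigma>\<^sup>2 else 0))"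
      by (intro sum.cong refl) (simp add: e2)
    finally show ?thesis unfolding sq .
  qed
  also have "\<dots> = \<sigma>\<^sup>2 * (\<Sum>k\<in>J. (w k)\<^sup>2)"
    using J by (simp add: sum_distrib_left power2_eq_square mult_ac if_distrib sum.delta cong: if_cong)
  finally show "(\<integral>e. (\<Sum>k\<in>J. w k * e k)\<^sup>2 \<partial>W) = \<sigma>\<^sup>2 * (\<Sum>k\<in>J. (w k)\<^sup>2)" .
qed

theorem theorem1:
  shows "\<exists>C::real. \<forall>(n::nat) (E::(nat \<times> nat) set) (\<beta>::nat) (p::nat \<Rightarrow> real)
            (c::nat \<Rightarrow> nat set \<Rightarrow> real) (\<sigma>::real).
     n > 0 \<and> E \<subseteq> {..<n} \<times> {..<n} \<and> \<sigma> \<ge> 0 \<and>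
     p 0 = 0 \<and> (\<forall>t<\<beta>. p t < p (Suc t)) \<and> p \<beta> \<le> 1
     \<longrightarrow>
     (let M = design_measure n \<beta> \<sigma>;
          X = est_PI n E \<beta> c p;
          \<Delta> = delta_p p \<beta>;
          d = max_degree n E
      in integrable M X \<and>
         (LINT \<omega>|M. X \<omega>) = TTE n E \<beta> c \<and>
         (LINT \<omega>|M. (X \<omega> - (LINT \<omega>'|M. X \<omega>'))\<^sup>2) \<le>
           C * (real d ^ 2 * real \<beta> ^ 2 / real n * (Ymax n E \<beta> c)\<^sup>2 / \<Delta> ^ (2 * \<beta>)
                + \<sigma>\<^sup>2 * real \<beta> / real n / \<Delta> ^ (2 * \<beta>)))"
proof (intro exI[of _ 128] allI impI)
  fix n :: nat and E :: "(nat \<times> nat) set" and \<beta> :: nat and p :: "nat \<Rightarrow> real"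
    and c :: "nat \<Rightarrow> nat set \<Rightarrow> real" and \<sigma> :: real
  assume A: "n > 0 \<and> E \<subseteq> {..<n} \<times> {..<n} \<and> \<sigma> \<ge> 0 \<and>
     p 0 = 0 \<and> (\<forall>t<\<beta>. p t < p (Suc t)) \<and> p \<beta> \<le> 1"
  interpret model p \<beta> n E c
    by unfold_locales (use A in auto)
  have s: "\<sigma> \<ge> 0" using A by simp
  define J where "J = {..<n} \<times> {..\<beta>}"
  define W where "W = PiM J (\<lambda>_. noise_dist \<sigma>)"
  define w where "w k = coef (snd k) / real n" for k :: "nat \<times> nat"
  define G where "G e = (\<Sum>k\<in>J. w k * e k)" for e :: "nat \<times> nat \<Rightarrow> real"
  have Jfin: "finite J" unfolding J_def by simp
  note NL = noise_lin[OF s Jfin, of w, folded W_def, folded G_def]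
  have Wp: "prob_space W" unfolding W_def by (rule prob_space_PiM) (use noise_facts(1)[OF s] in auto)
  have Up: "prob_space U" by (rule U_prob)
  have M: "design_measure n \<beta> \<sigma> = U \<Otimes>\<^sub>M W"
    unfolding design_measure_def W_def J_def Unif_def ..
  have Xeq: "est_PI n E \<beta> c p \<omega> = F (fst \<omega>) + G (snd \<omega>)" for \<omega>
  proof -
    have "G e = (\<Sum>t\<le>\<beta>. coef t * ((1 / real n) * (\<Sum>i<n. e (i, t))))" for e
    proof -
      have "G e = (\<Sum>i<n. \<Sum>t\<le>\<beta>. coef t / real n * e (i, t))"
        unfolding G_def J_def w_def sum.cartesian_product by (rule sum.cong) auto
      also have "\<dots> = (\<Sum>t\<le>\<beta>. \<Sum>i<n. coef t / real n * e (i, t))" by (rule sum.swap)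
      also have "\<dots> = (\<Sum>t\<le>\<beta>. coef t * ((1 / real n) * (\<Sum>i<n. e (i, t))))"
        by (simp add: sum_distrib_left)
      finally show ?thesis .
    qed
    then show ?thesis
      unfolding est_PI_def F_def Yobs_def Z_def coef_def
      by (simp add: sum.distrib distrib_left)
  qed
  have Fm: "F \<in> borel_measurable U" using F_integrable by auto
  have Gm: "G \<in> borel_measurable W" using NL(1) by auto
  have Fsqm: "(\<lambda>u. (F u - TTE n E \<beta> c)\<^sup>2) \<in> borel_measurable U" using Fm by measurable
  have Gsqm: "(\<lambda>e. (G e)\<^sup>2) \<in> borel_measurable W" using Gm by measurable
  note PI1 = pair_integral[OF Up Wp Fm Gm]
  note PI2 = pair_integral[OF Up Wp Fsqm Gsqm]
  have intX: "integrable (U \<Otimes>\<^sub>M W) (\<lambda>\<omega>. F (fst \<omega>) + G (snd \<omega>))"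
    using PI1(2) PI1(4) F_integrable NL(1) by auto
  have EX: "(\<integral>\<omega>. F (fst \<omega>) + G (snd \<omega>) \<partial>(U \<Otimes>\<^sub>M W)) = TTE n E \<beta> c"
    using PI1 F_integrable NL(1) NL(2) F_integral by simp
  have var: "(\<integral>\<omega>. (F (fst \<omega>) + G (snd \<omega>) - TTE n E \<beta> c)\<^sup>2 \<partial>(U \<Otimes>\<^sub>M W))
      \<le> 2 * (\<integral>u. (F u - TTE n E \<beta> c)\<^sup>2 \<partial>U) + 2 * (\<integral>e. (G e)\<^sup>2 \<partial>W)"
  proof -
    have i1: "integrable (U \<Otimes>\<^sub>M W) (\<lambda>\<omega>. (F (fst \<omega>) - TTE n E \<beta> c)\<^sup>2)"
      using PI2(2) Fsq_integrable by simp
    have i2: "integrable (U \<Otimes>\<^sub>M W) (\<lambda>\<omega>. (G (snd \<omega>))\<^sup>2)"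
      using PI2(4) NL(3) by simp
    have "(\<integral>\<omega>. (F (fst \<omega>) + G (snd \<omega>) - TTE n E \<beta> c)\<^sup>2 \<partial>(U \<Otimes>\<^sub>M W))
        \<le> (\<integral>\<omega>. 2 * (F (fst \<omega>) - TTE n E \<beta> c)\<^sup>2 + 2 * (G (snd \<omega>))\<^sup>2 \<partial>(U \<Otimes>\<^sub>M W))"
    proof (rule integral_mono')
      show "integrable (U \<Otimes>\<^sub>M W) (\<lambda>\<omega>. 2 * (F (fst \<omega>) - TTE n E \<beta> c)\<^sup>2 + 2 * (G (snd \<omega>))\<^sup>2)"
        using i1 i2 by auto
      fix \<omega>
      have "0 \<le> (F (fst \<omega>) - TTE n E \<beta> c - G (snd \<omega>))\<^sup>2" by simp
      then show "(F (fst \<omega>) + G (snd \<omega>) - TTE n E \<beta> c)\<^sup>2 \<le> 2 * (F (fst \<omega>) - TTE n E \<beta> c)\<^sup>2 + 2 * (G (snd \<omega>))\<^sup>2"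
        by (simp add: power2_eq_square algebra_simps)
      show "0 \<le> 2 * (F (fst \<omega>) - TTE n E \<beta> c)\<^sup>2 + 2 * (G (snd \<omega>))\<^sup>2" by simp
    qed
    also have "\<dots> = 2 * (\<integral>u. (F u - TTE n E \<beta> c)\<^sup>2 \<partial>U) + 2 * (\<integral>e. (G e)\<^sup>2 \<partial>W)"
      using i1 i2 PI2(1) PI2(3) by simp
    finally show ?thesis .
  qed
  show "let M = design_measure n \<beta> \<sigma>;
          X = est_PI n E \<beta> c p;
          \<Delta> = delta_p p \<beta>;
          d = max_degree n E
      in integrable M X \<and>
         (LINT \<omega>|M. X \<omega>) = TTE n E \<beta> c \<and>
         (LINT \<omega>|M. (X \<omega> - (LINT \<omega>'|M. X \<omega>'))\<^sup>2) \<le>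
           128 * (real d ^ 2 * real \<beta> ^ 2 / real n * (Ymax n E \<beta> c)\<^sup>2 / \<Delta> ^ (2 * \<beta>)
                + \<sigma>\<^sup>2 * real \<beta> / real n / \<Delta> ^ (2 * \<beta>))"
    unfolding Let_def M Xeq
  proof (intro conjI)
    show "integrable (U \<Otimes>\<^sub>M W) (\<lambda>\<omega>. F (fst \<omega>) + G (snd \<omega>))" by (rule intX)
    show "(\<integral>\<omega>. F (fst \<omega>) + G (snd \<omega>) \<partial>(U \<Otimes>\<^sub>M W)) = TTE n E \<beta> c" by (rule EX)
    show "(\<integral>\<omega>. (F (fst \<omega>) + G (snd \<omega>) - (\<integral>\<omega>'. F (fst \<omega>') + G (snd \<omega>') \<partial>(U \<Otimes>\<^sub>M W)))\<^sup>2 \<partial>(U \<Otimes>\<^sub>M W))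
      \<le> 128 * (real d ^ 2 * real \<beta> ^ 2 / real n * Y\<^sup>2 / delta_p p \<beta> ^ (2 * \<beta>)
                + \<sigma>\<^sup>2 * real \<beta> / real n / delta_p p \<beta> ^ (2 * \<beta>))"
      unfolding EX
    proof -
      define D where "D = delta_p p \<beta> ^ \<beta>"
      have Dpos: "D > 0"
      proof (cases "\<beta> = 0")
        case True then show ?thesis unfolding D_def by simp
      next
        case False then show ?thesis unfolding D_def using delta_pos by simp
      qed
      have D2: "delta_p p \<beta> ^ (2 * \<beta>) = D\<^sup>2" unfolding D_def by (simp add: power_mult[symmetric] mult.commute)
      have Kb: "K \<le> 4 * real \<beta> / D" using sum_abs_coef unfolding D_def .
      have K2: "K\<^sup>2 \<le> 16 * (real \<beta>)\<^sup>2 / D\<^sup>2"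
      proof -
        have "K\<^sup>2 \<le> (4 * real \<beta> / D)\<^sup>2" by (rule power_mono[OF Kb K_nonneg])
        also have "\<dots> = 16 * (real \<beta>)\<^sup>2 / D\<^sup>2" by (simp add: power_divide power_mult_distrib)
        finally show ?thesis .
      qed
      have vu: "(\<integral>u. (F u - TTE n E \<beta> c)\<^sup>2 \<partial>U) \<le> 64 * (real d ^ 2 * real \<beta> ^ 2 / real n * Y\<^sup>2 / D\<^sup>2)"
      proof -
        have "4 * real d ^ 2 * K\<^sup>2 * Y\<^sup>2 / real n \<le> 4 * real d ^ 2 * (16 * (real \<beta>)\<^sup>2 / D\<^sup>2) * Y\<^sup>2 / real n"
          using K2 npos by (intro divide_right_mono mult_right_mono mult_left_mono) auto
        also have "\<dots> = 64 * (real d ^ 2 * real \<beta> ^ 2 / real n * Y\<^sup>2 / D\<^sup>2)" by (simp add: mult_ac)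
        finally show ?thesis using var_u by linarith
      qed
      have sw: "(\<Sum>k\<in>J. (w k)\<^sup>2) = (\<Sum>t\<le>\<beta>. (coef t)\<^sup>2) / real n"
      proof -
        have "(\<Sum>k\<in>J. (w k)\<^sup>2) = (\<Sum>i<n. \<Sum>t\<le>\<beta>. (coef t)\<^sup>2 / (real n)\<^sup>2)"
          unfolding J_def w_def sum.cartesian_product by (rule sum.cong) (auto simp: power_divide)
        also have "\<dots> = real n * ((\<Sum>t\<le>\<beta>. (coef t)\<^sup>2) / (real n)\<^sup>2)" by (simp add: sum_divide_distrib)
        also have "\<dots> = (\<Sum>t\<le>\<beta>. (coef t)\<^sup>2) / real n" using npos by (simp add: power2_eq_square)
        finally show ?thesis .
      qed
      have vg: "(\<integral>e. (G e)\<^sup>2 \<partial>W) \<le> 8 * (\<sigma>\<^sup>2 * real \<beta> / real n / D\<^sup>2)"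
      proof -
        have "(\<integral>e. (G e)\<^sup>2 \<partial>W) = \<sigma>\<^sup>2 * ((\<Sum>t\<le>\<beta>. (coef t)\<^sup>2) / real n)"
          using NL(4) sw by simp
        also have "\<dots> \<le> \<sigma>\<^sup>2 * ((8 * real \<beta> / D\<^sup>2) / real n)"
          using sum_sq_coef D2 npos by (intro mult_left_mono divide_right_mono) auto
        also have "\<dots> = 8 * (\<sigma>\<^sup>2 * real \<beta> / real n / D\<^sup>2)" by (simp add: mult_ac)
        finally show ?thesis .
      qed
      have nn: "0 \<le> \<sigma>\<^sup>2 * real \<beta> / real n / D\<^sup>2" by simp
      have gen: "x \<le> 128 * (a + b)"
        if "(x::real) \<le> 2 * u + 2 * v" "(u::real) \<le> 64 * a" "(v::real) \<le> 8 * b" "0 \<le> (b::real)" for x a b u v :: real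
        using that by (smt (verit))
      have "(\<integral>\<omega>. (F (fst \<omega>) + G (snd \<omega>) - TTE n E \<beta> c)\<^sup>2 \<partial>(U \<Otimes>\<^sub>M W))
          \<le> 128 * (real d ^ 2 * real \<beta> ^ 2 / real n * Y\<^sup>2 / D\<^sup>2 + \<sigma>\<^sup>2 * real \<beta> / real n / D\<^sup>2)"
        using gen[OF var vu vg nn] .
      then show "(\<integral>\<omega>. (F (fst \<omega>) + G (snd \<omega>) - TTE n E \<beta> c)\<^sup>2 \<partial>(U \<Otimes>\<^sub>M W))
          \<le> 128 * (real d ^ 2 * real \<beta> ^ 2 / real n * Y\<^sup>2 / delta_p p \<beta> ^ (2 * \<beta>)
                + \<sigma>\<^sup>2 * real \<beta> / real n / delta_p p \<beta> ^ (2 * \<beta>))"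
        unfolding D2 .
    qed
  qed
qed



end
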